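(* Let $\mathbf p=(p_i)_{i\in\mathbb N}$ and $\mathbf q=(q_i)_{i\in\mathbb N}$ be sequences with $p_i,q_i\ge 0$ for all $i$ and $\sum_i p_i=\sum_i q_i=1$. Let $H(\mathbf p)=-\sum_{i\in\mathbb N}p_i\ln p_i$ (with the convention $0\ln 0=0$), and define $H(\mathbf q)$ similarly. Assume that for some $c\in(0,1/3)$, $$|p_i-q_i|\le c\,q_i\quad\text{for all } i=1,2,\dots.$$ Then $$H(\mathbf p)\le (1+c)H(\mathbf q)+c\ln 3.$$ *)

theory Defs
  imports "HOL-Analysis.Analysis"
begin

text \<open>Shannon entropy (natural log) of a probability sequence on the naturals,
  as an extended non-negative real so that infinite entropy is allowed.
  In Isabelle ln 0 = 0, so 0 * ln 0 = 0 as in the convention.\<close>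
definition entropy :: "(nat \<Rightarrow> real) \<Rightarrow> ennreal" where
  "entropy p = (\<Sum>i. ennreal (- (p i * ln (p i))))"

end

theory Submission
  imports Defs
begin

lemma pointwise:
  fixes p q c :: real
  assumes "p \<ge> 0" "q \<ge> 0" "q \<le> 1" "0 < c" "c < 1/3" "\<bar>p - q\<bar> \<le> c * q"
  shows "- (p * ln p) \<le> (1 + c) * (- (q * ln q)) + c * ln 3 * q"
proof (cases "q = 0")
  case True then show ?thesis using assms by simp
next
  case False
  hence qp: "q > 0" using assms by simp
  define s where "s = p / q"
  have ps: "p = q * s" using qp s_def by simp
  have h1: "q * (1 - c) \<le> q * s" "q * s \<le> q * (1 + c)" using assms(6) ps
    by (auto simp: abs_le_iff algebra_simps)
  have s1: "s \<ge> 1 - c" "s \<le> 1 + c"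
    using h1 qp mult_le_cancel_left_pos by blast+
  have spos: "s > 0" using s1 assms by simp
  have lnq: "- (q * ln q) \<ge> 0" using qp assms ln_le_zero_iff[of q]
    by (simp add: mult_nonneg_nonpos)
  have A: "s * (- (q * ln q)) \<le> (1 + c) * (- (q * ln q))"
    using s1 lnq by (intro mult_right_mono) auto
  have ln3: "ln 3 \<ge> (1::real)"
    using exp_le ln_ge_iff by (metis ln_exp ln_le_cancel_iff exp_gt_zero less_le_trans zero_less_one order.trans exp_ge_zero order_refl)
  have B: "- (s * ln s) \<le> c * ln 3"
  proof (cases "s \<ge> 1")
    case True
    then have "ln s \<ge> 0" by simp
    then have "- (s * ln s) \<le> 0" using spos by simp
    moreover have "c * ln 3 \<ge> 0" using assms ln3 by simp
    ultimately show ?thesis by linarith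
  next
    case False
    have "ln (1/s) \<le> 1/s - 1" using spos by (intro ln_le_minus_one) simp
    hence "- ln s \<le> 1/s - 1" using spos by (simp add: ln_div)
    hence "s * (- ln s) \<le> s * (1/s - 1)" using spos by (intro mult_left_mono) auto
    hence "- (s * ln s) \<le> 1 - s" using spos by (simp add: algebra_simps)
    also have "\<dots> \<le> c" using s1 by simp
    also have "\<dots> \<le> c * ln 3" using assms ln3 by simp
    finally show ?thesis .
  qed
  have "- (p * ln p) = s * (- (q * ln q)) + q * (- (s * ln s))"
    using ps qp spos by (simp add: ln_mult algebra_simps)
  also have "\<dots> \<le> (1 + c) * (- (q * ln q)) + q * (c * ln 3)"
    using A B qp by (intro add_mono mult_left_mono) auto
  finally show ?thesis by (simp add: algebra_simps)
qed

theorem lemma1: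
  fixes p q :: "nat \<Rightarrow> real" and c :: real
  assumes "\<And>i. p i \<ge> 0" and "\<And>i. q i \<ge> 0"
    and "p sums 1" and "q sums 1"
    and "0 < c" and "c < 1/3"
    and "\<And>i. \<bar>p i - q i\<bar> \<le> c * q i"
  shows "entropy p \<le> ennreal (1 + c) * entropy q + ennreal (c * ln 3)"
proof -
  have q1: "q i \<le> 1" for i
  proof -
    have "summable q" using assms(4) sums_summable by blast
    have "q i \<le> sum q {..<Suc i}" using assms(2)
      by (intro member_le_sum) auto
    also have "\<dots> \<le> suminf q" using \<open>summable q\<close> assms(2) by (intro sum_le_suminf) auto
    finally have "q i \<le> suminf q" .
    thus ?thesis using assms(4) sums_unique by fastforce
  qed
  have ln3: "ln 3 \<ge> (0::real)" by simp
  have pw: "ennreal (- (p i * ln (p i))) \<le> ennreal (1 + c) * ennreal (- (q i * ln (q i))) + ennreal (c * ln 3 * q i)" for i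
  proof -
    have lnq: "- (q i * ln (q i)) \<ge> 0" using q1[of i] assms(2)[of i] ln_le_zero_iff[of "q i"]
      by (cases "q i = 0") (auto simp: mult_nonneg_nonpos)
    have "ennreal (- (p i * ln (p i))) \<le> ennreal ((1 + c) * (- (q i * ln (q i))) + c * ln 3 * q i)"
      using pointwise[OF assms(1)[of i] assms(2)[of i] q1[of i] assms(5,6,7)] by (rule ennreal_leI)
    also have "\<dots> = ennreal (1 + c) * ennreal (- (q i * ln (q i))) + ennreal (c * ln 3 * q i)"
    proof -
      have a: "0 \<le> (1 + c) * (- (q i * ln (q i)))" using lnq assms(5) by (intro mult_nonneg_nonneg) auto
      have b: "0 \<le> c * ln 3 * q i" using assms(2)[of i] assms(5) ln3 by simp
      show ?thesis
        using ennreal_plus[OF a b] ennreal_mult[of "1+c" "- (q i * ln (q i))"] lnq assms(5)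
        by simp
    qed
    finally show ?thesis .
  qed
  have "entropy p \<le> (\<Sum>i. ennreal (1 + c) * ennreal (- (q i * ln (q i))) + ennreal (c * ln 3 * q i))"
    unfolding entropy_def by (intro suminf_le pw) auto
  also have "\<dots> = (\<Sum>i. ennreal (1 + c) * ennreal (- (q i * ln (q i)))) + (\<Sum>i. ennreal (c * ln 3 * q i))"
    by (intro suminf_add[symmetric]) auto
  also have "(\<Sum>i. ennreal (1 + c) * ennreal (- (q i * ln (q i)))) = ennreal (1 + c) * entropy q"
    unfolding entropy_def by (rule ennreal_suminf_cmult)
  also have "(\<Sum>i. ennreal (c * ln 3 * q i)) = ennreal (c * ln 3 * 1)"
    using assms(2,4,5) ln3 by (intro suminf_ennreal_eq sums_mult) auto
  finally show ?thesis by simp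
qed

end
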